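(* There exists a constant $C_0$ such that for every $m,\ell\ge1$, every choice of $\sigma_1\ge\sigma_2\ge\dots\ge\sigma_m\ge0$, $\rho_1\ge\rho_2\ge\dots\ge\rho_\ell>0$, $b_1,\dots,b_m>0$, $c_1,\dots,c_\ell>0$, every $1\le k\le\ell$, and both choices of sign, \[ \Bigl|\int_0^{\sqrt{\rho_\ell}}e^{\frac12i\lambda^2}e^{\pm i\sum_{j=1}^mb_j\sqrt{\lambda^2+\sigma_j}}\exp\Bigl(-\sum_{i=1}^\ell c_i\sqrt{\rho_i-\lambda^2}\Bigr)\frac{\lambda}{\sqrt{\rho_k-\lambda^2}}\,d\lambda\Bigr|\le C_0\min\Bigl[(1+\sigma_1+\rho_\ell)^{1/4},\ m^{3/2}c_k^{-1}\max_{j,i}(b_j+c_i)\Bigr]. \] *)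

theory Defs
  imports "HOL-Analysis.Analysis"
begin

end

theory Submission
  imports Defs
begin
lemma smvt_bound_inc:
  fixes f g :: "real \<Rightarrow> real"
  assumes ab: "a \<le> b" and fi: "f integrable_on {a..b}"
    and fb: "\<And>y z. a \<le> y \<Longrightarrow> y \<le> z \<Longrightarrow> z \<le> b \<Longrightarrow> \<bar>integral {y..z} f\<bar> \<le> M"
    and mono: "\<And>x y. a \<le> x \<Longrightarrow> x \<le> y \<Longrightarrow> y \<le> b \<Longrightarrow> g x \<le> g y"
    and gb: "\<And>x. a \<le> x \<Longrightarrow> x \<le> b \<Longrightarrow> \<bar>g x\<bar> \<le> K"
  shows "(\<lambda>x. g x * f x) integrable_on {a..b} \<and> \<bar>integral {a..b} (\<lambda>x. g x * f x)\<bar> \<le> 2*K*M"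
proof -
  obtain c where c: "c \<in> {a..b}"
    and hi: "((\<lambda>x. g x * f x) has_integral (g a * integral {a..c} f + g b * integral {c..b} f)) {a..b}"
    using second_mean_value_theorem_full[OF fi ab, of g] mono by blast
  have K0: "0 \<le> K" using gb[of a] ab by auto
  have "\<bar>g a * integral {a..c} f\<bar> \<le> K * M"
    unfolding abs_mult using c ab K0 by (intro mult_mono gb fb) auto
  moreover have "\<bar>g b * integral {c..b} f\<bar> \<le> K * M"
    unfolding abs_mult using c ab K0 by (intro mult_mono gb fb) auto
  ultimately show ?thesis using hi integral_unique[OF hi] by auto
qed

lemma smvt_bound:
  fixes f g :: "real \<Rightarrow> real"
  assumes ab: "a \<le> b" and fi: "f integrable_on {a..b}"
    and fb: "\<And>y z. a \<le> y \<Longrightarrow> y \<le> z \<Longrightarrow> z \<le> b \<Longrightarrow> \<bar>integral {y..z} f\<bar> \<le> M"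
    and mono: "(\<forall>x y. a \<le> x \<longrightarrow> x \<le> y \<longrightarrow> y \<le> b \<longrightarrow> g x \<le> g y) \<or>
               (\<forall>x y. a \<le> x \<longrightarrow> x \<le> y \<longrightarrow> y \<le> b \<longrightarrow> g y \<le> g x)"
    and gb: "\<And>x. a \<le> x \<Longrightarrow> x \<le> b \<Longrightarrow> \<bar>g x\<bar> \<le> K"
  shows "(\<lambda>x. g x * f x) integrable_on {a..b} \<and> \<bar>integral {a..b} (\<lambda>x. g x * f x)\<bar> \<le> 2*K*M"
  using mono
proof
  assume H: "\<forall>x y. a \<le> x \<longrightarrow> x \<le> y \<longrightarrow> y \<le> b \<longrightarrow> g x \<le> g y"
  have m': "\<And>x y. a \<le> x \<Longrightarrow> x \<le> y \<Longrightarrow> y \<le> b \<Longrightarrow> g x \<le> g y" using H by blast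
  show ?thesis by (rule smvt_bound_inc[OF ab fi fb m' gb])
next
  assume H: "\<forall>x y. a \<le> x \<longrightarrow> x \<le> y \<longrightarrow> y \<le> b \<longrightarrow> g y \<le> g x"
  have m': "\<And>x y. a \<le> x \<Longrightarrow> x \<le> y \<Longrightarrow> y \<le> b \<Longrightarrow> - g x \<le> - g y" using H by simp
  have gb': "\<And>x. a \<le> x \<Longrightarrow> x \<le> b \<Longrightarrow> \<bar>- g x\<bar> \<le> K" using gb by simp
  have "(\<lambda>x. - g x * f x) integrable_on {a..b} \<and> \<bar>integral {a..b} (\<lambda>x. - g x * f x)\<bar> \<le> 2*K*M"
    by (rule smvt_bound_inc[OF ab fi fb m' gb'])
  then have H1: "(\<lambda>x. - g x * f x) integrable_on {a..b}"
    and H2: "\<bar>integral {a..b} (\<lambda>x. - g x * f x)\<bar> \<le> 2*K*M" by auto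
  have "(\<lambda>x. - (- g x * f x)) integrable_on {a..b}" using integrable_neg[OF H1] .
  then have I1: "(\<lambda>x. g x * f x) integrable_on {a..b}" by simp
  have "integral {a..b} (\<lambda>x. - (- g x * f x)) = - integral {a..b} (\<lambda>x. - g x * f x)"
    by (rule integral_neg)
  then have "integral {a..b} (\<lambda>x. g x * f x) = - integral {a..b} (\<lambda>x. - g x * f x)" by simp
  then show ?thesis using I1 H2 by simp
qed

lemma smvt_bound2:
  fixes f g1 g2 :: "real \<Rightarrow> real"
  assumes ab: "a \<le> b" and fi: "\<And>y z. a \<le> y \<Longrightarrow> y \<le> z \<Longrightarrow> z \<le> b \<Longrightarrow> f integrable_on {y..z}"
    and fb: "\<And>y z. a \<le> y \<Longrightarrow> y \<le> z \<Longrightarrow> z \<le> b \<Longrightarrow> \<bar>integral {y..z} f\<bar> \<le> M"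
    and mono1: "(\<forall>x y. a \<le> x \<longrightarrow> x \<le> y \<longrightarrow> y \<le> b \<longrightarrow> g1 x \<le> g1 y) \<or>
               (\<forall>x y. a \<le> x \<longrightarrow> x \<le> y \<longrightarrow> y \<le> b \<longrightarrow> g1 y \<le> g1 x)"
    and gb1: "\<And>x. a \<le> x \<Longrightarrow> x \<le> b \<Longrightarrow> \<bar>g1 x\<bar> \<le> K1"
    and mono2: "(\<forall>x y. a \<le> x \<longrightarrow> x \<le> y \<longrightarrow> y \<le> b \<longrightarrow> g2 x \<le> g2 y) \<or>
               (\<forall>x y. a \<le> x \<longrightarrow> x \<le> y \<longrightarrow> y \<le> b \<longrightarrow> g2 y \<le> g2 x)"
    and gb2: "\<And>x. a \<le> x \<Longrightarrow> x \<le> b \<Longrightarrow> \<bar>g2 x\<bar> \<le> K2"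
  shows "(\<lambda>x. g1 x * (g2 x * f x)) integrable_on {a..b} \<and>
         \<bar>integral {a..b} (\<lambda>x. g1 x * (g2 x * f x))\<bar> \<le> 2*K1*(2*K2*M)"
proof -
  have sub: "(\<lambda>x. g2 x * f x) integrable_on {y..z} \<and> \<bar>integral {y..z} (\<lambda>x. g2 x * f x)\<bar> \<le> 2*K2*M"
    if "a \<le> y" "y \<le> z" "z \<le> b" for y z
  proof (rule smvt_bound[OF \<open>y \<le> z\<close>])
    show "f integrable_on {y..z}" using fi that by auto
    show "\<bar>integral {y'..z'} f\<bar> \<le> M" if "y \<le> y'" "y' \<le> z'" "z' \<le> z" for y' z'
      using fb that \<open>a \<le> y\<close> \<open>z \<le> b\<close> by auto
    show "(\<forall>x ya. y \<le> x \<longrightarrow> x \<le> ya \<longrightarrow> ya \<le> z \<longrightarrow> g2 x \<le> g2 ya) \<or>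
      (\<forall>x ya. y \<le> x \<longrightarrow> x \<le> ya \<longrightarrow> ya \<le> z \<longrightarrow> g2 ya \<le> g2 x)"
      using mono2
    proof (elim disjE)
      assume H: "\<forall>x y. a \<le> x \<longrightarrow> x \<le> y \<longrightarrow> y \<le> b \<longrightarrow> g2 x \<le> g2 y"
      show ?thesis
        by (intro disjI1 allI impI, rule H[rule_format]) (use that in linarith)+
    next
      assume H: "\<forall>x y. a \<le> x \<longrightarrow> x \<le> y \<longrightarrow> y \<le> b \<longrightarrow> g2 y \<le> g2 x"
      show ?thesis
        by (intro disjI2 allI impI, rule H[rule_format]) (use that in linarith)+
    qed
    show "\<bar>g2 x\<bar> \<le> K2" if "y \<le> x" "x \<le> z" for x using gb2 that \<open>a \<le> y\<close> \<open>z \<le> b\<close> by auto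
  qed
  show ?thesis
    using smvt_bound[OF ab _ _ mono1 gb1, of "\<lambda>x. g2 x * f x" "2*K2*M"] sub ab by auto
qed

lemma vdc_complex:
  fixes \<phi> F :: "real \<Rightarrow> complex" and g1 g2 :: "real \<Rightarrow> real"
  assumes ab: "a \<le> b"
    and FTC: "\<And>y z. a \<le> y \<Longrightarrow> y \<le> z \<Longrightarrow> z \<le> b \<Longrightarrow> (\<phi> has_integral (F z - F y)) {y..z}"
    and Fb: "\<And>x. a \<le> x \<Longrightarrow> x \<le> b \<Longrightarrow> norm (F x) \<le> 1"
    and mono1: "(\<forall>x y. a \<le> x \<longrightarrow> x \<le> y \<longrightarrow> y \<le> b \<longrightarrow> g1 x \<le> g1 y) \<or>
               (\<forall>x y. a \<le> x \<longrightarrow> x \<le> y \<longrightarrow> y \<le> b \<longrightarrow> g1 y \<le> g1 x)"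
    and gb1: "\<And>x. a \<le> x \<Longrightarrow> x \<le> b \<Longrightarrow> \<bar>g1 x\<bar> \<le> K1"
    and mono2: "(\<forall>x y. a \<le> x \<longrightarrow> x \<le> y \<longrightarrow> y \<le> b \<longrightarrow> g2 x \<le> g2 y) \<or>
               (\<forall>x y. a \<le> x \<longrightarrow> x \<le> y \<longrightarrow> y \<le> b \<longrightarrow> g2 y \<le> g2 x)"
    and gb2: "\<And>x. a \<le> x \<Longrightarrow> x \<le> b \<Longrightarrow> \<bar>g2 x\<bar> \<le> K2"
  shows "norm (integral {a..b} (\<lambda>x. complex_of_real (g1 x * g2 x) * \<phi> x)) \<le> 16*K1*K2"
proof -
  have dif: "norm (F z - F y) \<le> 2" if "a \<le> y" "y \<le> z" "z \<le> b" for y z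
    using norm_triangle_ineq4[of "F z" "F y"] Fb[of y] Fb[of z] that by auto
  have R: "(\<lambda>x. g1 x * (g2 x * Re (\<phi> x))) integrable_on {a..b} \<and>
         \<bar>integral {a..b} (\<lambda>x. g1 x * (g2 x * Re (\<phi> x)))\<bar> \<le> 2*K1*(2*K2*2)"
  proof (rule smvt_bound2[OF ab _ _ mono1 gb1 mono2 gb2])
    fix y z assume yz: "a \<le> y" "y \<le> z" "z \<le> b"
    have h: "((\<lambda>x. Re (\<phi> x)) has_integral Re (F z - F y)) {y..z}"
      using has_integral_Re[OF FTC[OF yz]] .
    then show "(\<lambda>x. Re (\<phi> x)) integrable_on {y..z}" by blast
    show "\<bar>integral {y..z} (\<lambda>x. Re (\<phi> x))\<bar> \<le> 2"
      using integral_unique[OF h] abs_Re_le_cmod[of "F z - F y"] dif[OF yz] by simp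
  qed
  have I: "(\<lambda>x. g1 x * (g2 x * Im (\<phi> x))) integrable_on {a..b} \<and>
         \<bar>integral {a..b} (\<lambda>x. g1 x * (g2 x * Im (\<phi> x)))\<bar> \<le> 2*K1*(2*K2*2)"
  proof (rule smvt_bound2[OF ab _ _ mono1 gb1 mono2 gb2])
    fix y z assume yz: "a \<le> y" "y \<le> z" "z \<le> b"
    have h: "((\<lambda>x. Im (\<phi> x)) has_integral Im (F z - F y)) {y..z}"
      using has_integral_Im[OF FTC[OF yz]] .
    then show "(\<lambda>x. Im (\<phi> x)) integrable_on {y..z}" by blast
    show "\<bar>integral {y..z} (\<lambda>x. Im (\<phi> x))\<bar> \<le> 2"
      using integral_unique[OF h] abs_Im_le_cmod[of "F z - F y"] dif[OF yz] by simp
  qed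
  define IR where "IR = integral {a..b} (\<lambda>x. g1 x * (g2 x * Re (\<phi> x)))"
  define II where "II = integral {a..b} (\<lambda>x. g1 x * (g2 x * Im (\<phi> x)))"
  have hR: "((\<lambda>x. complex_of_real (g1 x * (g2 x * Re (\<phi> x)))) has_integral complex_of_real IR) {a..b}"
    using has_integral_of_real[OF integrable_integral[OF conjunct1[OF R]]] unfolding IR_def .
  have hI: "((\<lambda>x. complex_of_real (g1 x * (g2 x * Im (\<phi> x))) * \<i>) has_integral complex_of_real II * \<i>) {a..b}"
    using has_integral_mult_left[OF has_integral_of_real[OF integrable_integral[OF conjunct1[OF I]]]] unfolding II_def .
  have eq: "complex_of_real (g1 x * g2 x) * \<phi> x =
     complex_of_real (g1 x * (g2 x * Re (\<phi> x))) + complex_of_real (g1 x * (g2 x * Im (\<phi> x))) * \<i>" for x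
    by (simp add: complex_eq_iff)
  have "((\<lambda>x. complex_of_real (g1 x * g2 x) * \<phi> x) has_integral (complex_of_real IR + complex_of_real II * \<i>)) {a..b}"
    unfolding eq using has_integral_add[OF hR hI] .
  then have ieq: "integral {a..b} (\<lambda>x. complex_of_real (g1 x * g2 x) * \<phi> x) = complex_of_real IR + complex_of_real II * \<i>"
    by (rule integral_unique)
  have "norm (complex_of_real IR + complex_of_real II * \<i>) \<le> \<bar>IR\<bar> + \<bar>II\<bar>"
    using norm_triangle_ineq[of "complex_of_real IR" "complex_of_real II * \<i>"] by (simp add: norm_mult)
  then have "norm (integral {a..b} (\<lambda>x. complex_of_real (g1 x * g2 x) * \<phi> x)) \<le> \<bar>IR\<bar> + \<bar>II\<bar>"
    by (simp only: ieq)
  then have "norm (integral {a..b} (\<lambda>x. complex_of_real (g1 x * g2 x) * \<phi> x)) \<le> 2*(2*K1*(2*K2*2))"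
    using R[THEN conjunct2] I[THEN conjunct2] unfolding IR_def[symmetric] II_def[symmetric] by linarith
  moreover have "2*(2*K1*(2*K2*2)) = 16*K1*K2" by simp
  ultimately show ?thesis by linarith
qed

lemma chain_le:
  fixes a :: "nat \<Rightarrow> real"
  assumes ch: "\<forall>j\<in>{1..<m}. a j \<ge> a (Suc j)" and "1 \<le> i" "i \<le> j" "j \<le> m"
  shows "a j \<le> a i"
  using \<open>i \<le> j\<close> \<open>j \<le> m\<close>
proof (induction j rule: dec_induct)
  case base then show ?case by simp
next
  case (step n)
  then have "a (Suc n) \<le> a n" using ch \<open>1 \<le> i\<close> by auto
  then show ?case using step by auto
qed

locale lsetup =
  fixes m l :: nat and \<sigma> \<rho> b c :: "nat \<Rightarrow> real" and k :: nat and s :: real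
  assumes m1: "1 \<le> m" and l1: "1 \<le> l"
    and \<sigma>mono: "\<forall>j\<in>{1..<m}. \<sigma> j \<ge> \<sigma> (Suc j)" and \<sigma>m: "\<sigma> m \<ge> 0"
    and \<rho>mono: "\<forall>i\<in>{1..<l}. \<rho> i \<ge> \<rho> (Suc i)" and \<rho>l: "\<rho> l > 0"
    and bpos: "\<forall>j\<in>{1..m}. b j > 0" and cpos: "\<forall>i\<in>{1..l}. c i > 0"
    and kin: "k \<in> {1..l}" and s: "s \<in> {1, -1}"
begin

definition "L = sqrt (\<rho> l)"
definition "Rk x = sqrt (\<rho> k - x\<^sup>2)"
definition "E x = exp (- (\<Sum>i=1..l. c i * sqrt (\<rho> i - x\<^sup>2)))"
definition "g x = (\<Sum>j=1..m. b j / sqrt (x\<^sup>2 + \<sigma> j))"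
definition "Q x = 1 + s * g x"
definition "P x = x\<^sup>2 / 2 + s * (\<Sum>j=1..m. b j * sqrt (x\<^sup>2 + \<sigma> j))"
definition "dP x = x + s * (\<Sum>j=1..m. b j * (x / sqrt (x\<^sup>2 + \<sigma> j)))"
definition "f = (\<lambda>x::real. exp (\<i> * complex_of_real (x\<^sup>2 / 2))
           * exp (\<i> * complex_of_real (s * (\<Sum>j=1..m. b j * sqrt (x\<^sup>2 + \<sigma> j))))
           * complex_of_real (exp (- (\<Sum>i=1..l. c i * sqrt (\<rho> i - x\<^sup>2)))
                               * x / sqrt (\<rho> k - x\<^sup>2)))"
definition "Mj x = x * exp (- c k * Rk x) / Rk x"
definition "G x = exp (- c k * Rk x) / c k"

lemma \<sigma>_nonneg: "j \<in> {1..m} \<Longrightarrow> 0 \<le> \<sigma> j"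
  using chain_le[OF \<sigma>mono, of j m] \<sigma>m m1 by auto

lemma \<sigma>_le1: "j \<in> {1..m} \<Longrightarrow> \<sigma> j \<le> \<sigma> 1"
  using chain_le[OF \<sigma>mono, of 1 j] by auto

lemma \<rho>_ge: "i \<in> {1..l} \<Longrightarrow> \<rho> l \<le> \<rho> i"
  using chain_le[OF \<rho>mono, of i l] by auto

lemma ck: "0 < c k" using cpos kin by auto
lemma \<rho>k: "\<rho> l \<le> \<rho> k" using \<rho>_ge kin by auto

lemma L_pos: "0 < L" unfolding L_def using \<rho>l by auto
lemma L2: "L\<^sup>2 = \<rho> l" unfolding L_def using \<rho>l by auto

lemma x2_le: assumes "0 \<le> x" "x \<le> L" shows "x\<^sup>2 \<le> \<rho> l"
  using power_mono[OF assms(2) assms(1), of 2] L2 by auto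

lemma x2_less: assumes "0 \<le> x" "x < L" shows "x\<^sup>2 < \<rho> l"
  using power_strict_mono[OF assms(2) assms(1), of 2] L2 by auto

lemma Rk_nonneg: "0 \<le> Rk x" if "0 \<le> x" "x \<le> L"
  unfolding Rk_def using x2_le[OF that] \<rho>k by auto

lemma Rk_pos: "0 < Rk x" if "0 \<le> x" "x < L"
  unfolding Rk_def using x2_less[OF that] \<rho>k by auto

lemma E_le_exp: assumes "0 \<le> x" "x \<le> L" shows "E x \<le> exp (- c k * Rk x)"
proof -
  have nn: "0 \<le> c i * sqrt (\<rho> i - x\<^sup>2)" if "i \<in> {1..l}" for i
  proof -
    have "0 < c i" using cpos that by auto
    moreover have "0 \<le> \<rho> i - x\<^sup>2" using \<rho>_ge[OF that] x2_le[OF assms] by auto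
    ultimately show ?thesis by auto
  qed
  have "c k * sqrt (\<rho> k - x\<^sup>2) \<le> (\<Sum>i=1..l. c i * sqrt (\<rho> i - x\<^sup>2))"
    using member_le_sum[of k "{1..l}" "\<lambda>i. c i * sqrt (\<rho> i - x\<^sup>2)"] nn kin by auto
  then show ?thesis unfolding E_def Rk_def by auto
qed

lemma E_pos: "0 < E x" unfolding E_def by auto

lemma E_le1: assumes "0 \<le> x" "x \<le> L" shows "E x \<le> 1"
proof -
  have "exp (- c k * Rk x) \<le> 1" using ck Rk_nonneg[OF assms] by auto
  then show ?thesis using E_le_exp[OF assms] by linarith
qed

lemma norm_f: assumes "0 \<le> x" "x \<le> L" shows "norm (f x) = E x * x / Rk x"
proof -
  have "norm (f x) = \<bar>E x * x / Rk x\<bar>"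
    unfolding f_def norm_mult norm_exp_i_times norm_of_real by (simp add: E_def Rk_def)
  also have "\<dots> = E x * x / Rk x" using assms E_pos[of x] Rk_nonneg[OF assms] by auto
  finally show ?thesis .
qed

lemma f_le_Mj: assumes "0 \<le> x" "x \<le> L" shows "norm (f x) \<le> Mj x"
  unfolding norm_f[OF assms] Mj_def using E_le_exp[OF assms] assms Rk_nonneg[OF assms]
  by (simp add: divide_right_mono mult_left_mono mult.commute)

lemma Mj_le: assumes "0 \<le> x" "x \<le> L" shows "Mj x \<le> x / Rk x"
proof -
  have "exp (- c k * Rk x) \<le> 1" using ck Rk_nonneg[OF assms] by auto
  then show ?thesis unfolding Mj_def using assms Rk_nonneg[OF assms]
    by (simp add: divide_right_mono mult_left_le)
qed

lemma Rk_deriv: assumes "0 \<le> x" "x < L"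
  shows "(Rk has_real_derivative (- x / Rk x)) (at x)"
proof -
  have pos: "0 < \<rho> k - x\<^sup>2" using x2_less[OF assms] \<rho>k by auto
  have d1: "((\<lambda>x. \<rho> k - x\<^sup>2) has_real_derivative (- (2 * x))) (at x)"
    by (auto intro!: derivative_eq_intros)
  have "((\<lambda>x. sqrt (\<rho> k - x\<^sup>2)) has_real_derivative (inverse (sqrt (\<rho> k - x\<^sup>2)) / 2 * (- (2 * x)))) (at x)"
    using DERIV_chain2[where f=sqrt and g="\<lambda>x. \<rho> k - x\<^sup>2", OF DERIV_real_sqrt[OF pos] d1] .
  then show ?thesis unfolding Rk_def[abs_def]
    by (rule DERIV_cong) (simp add: field_simps Rk_def)
qed

lemma Rk_cont: "continuous_on S Rk" unfolding Rk_def[abs_def] by (intro continuous_intros)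

lemma Mj_int: assumes "0 \<le> u" "u \<le> v" "v \<le> L"
  shows "(Mj has_integral (G v - G u)) {u..v}"
proof (rule fundamental_theorem_of_calculus_interior[OF \<open>u \<le> v\<close>])
  show "continuous_on {u..v} G" unfolding G_def by (intro continuous_intros Rk_cont) (use ck in auto)
  fix x assume x: "x \<in> {u<..<v}"
  then have x0: "0 \<le> x" "x < L" using assms by auto
  have "(G has_real_derivative Mj x) (at x)"
    unfolding G_def[abs_def] using Rk_deriv[OF x0] ck
    by (auto intro!: derivative_eq_intros simp: Mj_def field_simps)
  then show "(G has_vector_derivative Mj x) (at x)"
    using has_real_derivative_iff_has_vector_derivative by blast
qed

lemma N_int: assumes "0 \<le> u" "u \<le> v" "v \<le> L"
  shows "((\<lambda>x. x / Rk x) has_integral (Rk u - Rk v)) {u..v}"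
proof -
  have "((\<lambda>x. x / Rk x) has_integral ((- Rk v) - (- Rk u))) {u..v}"
  proof (rule fundamental_theorem_of_calculus_interior[OF \<open>u \<le> v\<close>])
    show "continuous_on {u..v} (\<lambda>x. - Rk x)" by (intro continuous_intros Rk_cont)
    fix x assume x: "x \<in> {u<..<v}"
    then have x0: "0 \<le> x" "x < L" using assms by auto
    have "((\<lambda>x. - Rk x) has_real_derivative (- (- x / Rk x))) (at x)"
      using Rk_deriv[OF x0] by (auto intro!: derivative_eq_intros)
    then show "((\<lambda>x. - Rk x) has_vector_derivative x / Rk x) (at x)"
      using has_real_derivative_iff_has_vector_derivative by force
  qed
  then show ?thesis by simp
qed

lemma f_cont: "continuous_on {0..<L} f"
proof -
  have "\<rho> k - x\<^sup>2 \<noteq> 0" if "x \<in> {0..<L}" for x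
    using x2_less[of x] that \<rho>k by auto
  then show ?thesis unfolding f_def by (intro continuous_intros) auto
qed

lemma f_integrable: "f integrable_on {0..L}"
proof -
  have Mi: "Mj integrable_on {0..L}" using Mj_int[of 0 L] L_pos by auto
  have Mi': "Mj integrable_on {0..<L}"
    by (rule integrable_spike_set[OF Mi]) (auto intro: negligible_subset[of "{L}"])
  have "f absolutely_integrable_on {0..<L}"
    by (rule measurable_bounded_by_integrable_imp_absolutely_integrable[OF _ _ Mi'])
       (auto intro!: continuous_imp_measurable_on_sets_lebesgue f_cont f_le_Mj)
  then have "f integrable_on {0..<L}" using set_lebesgue_integral_eq_integral(1) by blast
  then show ?thesis
    by (rule integrable_spike_set) (auto intro: negligible_subset[of "{L}"])
qed

lemma triv_bound: assumes "0 \<le> u" "u \<le> v" "v \<le> L"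
  shows "norm (integral {u..v} f) \<le> 1 / c k" "norm (integral {u..v} f) \<le> sqrt (v\<^sup>2 - u\<^sup>2)"
proof -
  have fi: "f integrable_on {u..v}"
    by (rule integrable_subinterval_real[OF f_integrable]) (use assms in auto)
  have Mi: "(Mj has_integral (G v - G u)) {u..v}" by (rule Mj_int[OF assms])
  have n1: "norm (integral {u..v} f) \<le> G v - G u"
    using integral_norm_bound_integral[OF fi _ f_le_Mj] Mi integral_unique[OF Mi] assms
    by (metis atLeastAtMost_iff has_integral_integrable order_trans)
  have "G v \<le> 1 / c k" "0 \<le> G u"
    unfolding G_def using ck Rk_nonneg[of v] Rk_nonneg[of u] assms
    by (auto simp: divide_right_mono)
  then show "norm (integral {u..v} f) \<le> 1 / c k" using n1 by linarith
  have "G v - G u \<le> Rk u - Rk v"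
    using has_integral_le[OF Mi N_int[OF assms]] Mj_le assms by force
  moreover have "Rk u - Rk v \<le> sqrt (v\<^sup>2 - u\<^sup>2)"
  proof -
    have v2: "v\<^sup>2 \<le> \<rho> k" using x2_le[of v] assms \<rho>k by auto
    have uv: "u\<^sup>2 \<le> v\<^sup>2" using assms by (intro power_mono) auto
    have "sqrt (\<rho> k - u\<^sup>2) \<le> sqrt (\<rho> k - v\<^sup>2) + sqrt (v\<^sup>2 - u\<^sup>2)"
      using sqrt_add_le_add_sqrt[of "\<rho> k - v\<^sup>2" "v\<^sup>2 - u\<^sup>2"] v2 uv by auto
    then show ?thesis unfolding Rk_def by auto
  qed
  ultimately show "norm (integral {u..v} f) \<le> sqrt (v\<^sup>2 - u\<^sup>2)" using n1 by linarith
qed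

end

context lsetup begin

lemma sq_pos: assumes "1 \<le> x" "j \<in> {1..m}" shows "0 < x\<^sup>2 + \<sigma> j"
proof -
  have "1 \<le> x\<^sup>2" using assms(1) by (simp add: one_le_power)
  then show ?thesis using \<sigma>_nonneg[OF assms(2)] by linarith
qed

lemma sqrt_term_deriv: assumes "0 < x\<^sup>2 + a"
  shows "((\<lambda>x. sqrt (x\<^sup>2 + a)) has_real_derivative (x / sqrt (x\<^sup>2 + a))) (at x)"
proof -
  have d1: "((\<lambda>x. x\<^sup>2 + a) has_real_derivative (2 * x)) (at x)"
    by (auto intro!: derivative_eq_intros)
  have "((\<lambda>x. sqrt (x\<^sup>2 + a)) has_real_derivative (inverse (sqrt (x\<^sup>2 + a)) / 2 * (2 * x))) (at x)"
    using DERIV_chain2[where f=sqrt and g="\<lambda>x. x\<^sup>2 + a", OF DERIV_real_sqrt[OF assms] d1] .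
  then show ?thesis by (rule DERIV_cong) (simp add: field_simps)
qed

lemma P_deriv: assumes "1 \<le> x" shows "(P has_real_derivative dP x) (at x)"
proof -
  have "((\<lambda>x. \<Sum>j=1..m. b j * sqrt (x\<^sup>2 + \<sigma> j)) has_real_derivative
          (\<Sum>j=1..m. b j * (x / sqrt (x\<^sup>2 + \<sigma> j)))) (at x)"
    by (intro DERIV_sum DERIV_cmult sqrt_term_deriv sq_pos[OF assms]) auto
  note dsum = this
  have dq: "((\<lambda>x. x\<^sup>2 / 2) has_real_derivative x) (at x)" by (auto intro!: derivative_eq_intros)
  show ?thesis unfolding P_def[abs_def] dP_def
    by (rule DERIV_add[OF dq DERIV_cmult[OF dsum, of s]])
qed

lemma dP_eq: "dP x = x * Q x"
  unfolding dP_def Q_def g_def by (simp add: sum_distrib_left field_simps)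

lemma f_eq: "f x = exp (\<i> * complex_of_real (P x)) * complex_of_real (E x * x / Rk x)"
proof -
  have "exp (\<i> * complex_of_real (x\<^sup>2 / 2)) * exp (\<i> * complex_of_real (s * (\<Sum>j=1..m. b j * sqrt (x\<^sup>2 + \<sigma> j))))
      = exp (\<i> * complex_of_real (P x))"
    unfolding P_def by (simp add: exp_add[symmetric] distrib_left)
  then show ?thesis unfolding f_def E_def Rk_def by simp
qed

lemma g_nonneg: assumes "1 \<le> x" shows "0 \<le> g x"
  unfolding g_def
proof (intro sum_nonneg)
  fix j assume j: "j \<in> {1..m}"
  have "0 < b j" using bpos j by auto
  moreover have "0 < sqrt (x\<^sup>2 + \<sigma> j)" using sq_pos[OF assms j] by simp
  ultimately show "0 \<le> b j / sqrt (x\<^sup>2 + \<sigma> j)" by simp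
qed

lemma g_anti: assumes "1 \<le> x" "x \<le> y" shows "g y \<le> g x"
  unfolding g_def
proof (rule sum_mono)
  fix j assume j: "j \<in> {1..m}"
  have "x\<^sup>2 \<le> y\<^sup>2" using assms by (intro power_mono) auto
  then have "sqrt (x\<^sup>2 + \<sigma> j) \<le> sqrt (y\<^sup>2 + \<sigma> j)" by simp
  moreover have "0 < sqrt (x\<^sup>2 + \<sigma> j)" using sq_pos[OF assms(1) j] by simp
  moreover have "0 < b j" using bpos j by auto
  ultimately show "b j / sqrt (y\<^sup>2 + \<sigma> j) \<le> b j / sqrt (x\<^sup>2 + \<sigma> j)"
    by (intro divide_left_mono) auto
qed

lemma g_le: assumes "1 \<le> x" shows "g x \<le> (\<Sum>j=1..m. b j) / x"
  unfolding g_def sum_divide_distrib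
proof (rule sum_mono)
  fix j assume j: "j \<in> {1..m}"
  have "x\<^sup>2 \<le> x\<^sup>2 + \<sigma> j" using \<sigma>_nonneg[OF j] by simp
  then have "x \<le> sqrt (x\<^sup>2 + \<sigma> j)" using assms real_le_rsqrt by blast
  moreover have "0 < b j" using bpos j by auto
  moreover have "0 < sqrt (x\<^sup>2 + \<sigma> j) * x" using assms sq_pos[OF assms j] by simp
  ultimately show "b j / sqrt (x\<^sup>2 + \<sigma> j) \<le> b j / x"
    using assms by (intro divide_left_mono) auto
qed

lemma E_mono: assumes "0 \<le> x" "x \<le> y" "y \<le> L" shows "E x \<le> E y"
proof -
  have "(\<Sum>i=1..l. c i * sqrt (\<rho> i - y\<^sup>2)) \<le> (\<Sum>i=1..l. c i * sqrt (\<rho> i - x\<^sup>2))"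
  proof (rule sum_mono)
    fix i assume i: "i \<in> {1..l}"
    have "x\<^sup>2 \<le> y\<^sup>2" using assms by (intro power_mono) auto
    moreover have "0 < c i" using cpos i by auto
    ultimately show "c i * sqrt (\<rho> i - y\<^sup>2) \<le> c i * sqrt (\<rho> i - x\<^sup>2)"
      by (intro mult_left_mono) auto
  qed
  then show ?thesis unfolding E_def by simp
qed

lemma Rk_anti: assumes "0 \<le> x" "x \<le> y" shows "Rk y \<le> Rk x"
proof -
  have "x\<^sup>2 \<le> y\<^sup>2" using assms by (intro power_mono) auto
  then show ?thesis unfolding Rk_def by simp
qed

lemma Q_mono_cases: assumes "1 \<le> x" "x \<le> y"
  shows "(s = 1 \<and> Q y \<le> Q x) \<or> (s = -1 \<and> Q x \<le> Q y)"
  using s g_anti[OF assms] unfolding Q_def by auto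

lemma vdc_region:
  assumes u1: "1 \<le> u" and uv: "u \<le> v" and vL: "v < L" and ep: "0 < \<epsilon>"
    and Qs: "(\<forall>x\<in>{u..v}. \<epsilon> \<le> Q x) \<or> (\<forall>x\<in>{u..v}. Q x \<le> - \<epsilon>)"
  shows "norm (integral {u..v} f) \<le> 16 * (1 / Rk v) * (1 / \<epsilon>)"
proof -
  define \<phi> where "\<phi> x = exp (\<i> * complex_of_real (P x)) * (\<i> * complex_of_real (dP x))" for x
  define F where "F x = exp (\<i> * complex_of_real (P x))" for x
  define g1 where "g1 x = E x / Rk x" for x
  define g2 where "g2 x = inverse (Q x)" for x
  have Fd: "(F has_vector_derivative \<phi> x) (at x within S)" if "1 \<le> x" for x S
  proof -
    have d1: "((\<lambda>x. complex_of_real (P x)) has_vector_derivative complex_of_real (dP x)) (at x within S)"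
      using has_vector_derivative_of_real[OF P_deriv[OF that]] has_vector_derivative_at_within by blast
    have d2: "((\<lambda>z. exp (\<i> * z)) has_field_derivative (\<i> * exp (\<i> * complex_of_real (P x))))
              (at (complex_of_real (P x)) within (\<lambda>x. complex_of_real (P x)) ` S)"
      by (auto intro!: derivative_eq_intros)
    have "((\<lambda>z. exp (\<i> * z)) \<circ> (\<lambda>x. complex_of_real (P x)) has_vector_derivative
             (complex_of_real (dP x) * (\<i> * exp (\<i> * complex_of_real (P x))))) (at x within S)"
      by (rule field_vector_diff_chain_within[OF d1 d2])
    then show ?thesis unfolding F_def[abs_def] \<phi>_def by (simp add: o_def mult_ac)
  qed
  have FTC: "(\<phi> has_integral (F z - F y)) {y..z}" if "u \<le> y" "y \<le> z" "z \<le> v" for y z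
    by (rule fundamental_theorem_of_calculus[OF \<open>y \<le> z\<close>]) (use Fd that u1 in auto)
  have Fb: "norm (F x) \<le> 1" for x unfolding F_def by simp
  have Rkv: "0 < Rk v" using Rk_pos[of v] u1 uv vL by auto
  have mono1: "(\<forall>x y. u \<le> x \<longrightarrow> x \<le> y \<longrightarrow> y \<le> v \<longrightarrow> g1 x \<le> g1 y) \<or>
               (\<forall>x y. u \<le> x \<longrightarrow> x \<le> y \<longrightarrow> y \<le> v \<longrightarrow> g1 y \<le> g1 x)"
  proof (intro disjI1 allI impI)
    fix x y assume xy: "u \<le> x" "x \<le> y" "y \<le> v"
    have x0: "0 \<le> x" "x < L" "0 \<le> y" "y < L" using xy u1 vL by auto
    have "E x \<le> E y" using E_mono[of x y] x0 xy by auto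
    moreover have "inverse (Rk x) \<le> inverse (Rk y)"
      using Rk_anti[of x y] Rk_pos[of y] x0 xy by (intro le_imp_inverse_le) auto
    moreover have "0 \<le> E x" "0 \<le> inverse (Rk y)" "0 \<le> inverse (Rk x)" using E_pos[of x] Rk_pos[of y] Rk_pos[of x] x0 by auto
    ultimately have "E x * inverse (Rk x) \<le> E y * inverse (Rk y)"
      by (intro mult_mono) auto
    then show "g1 x \<le> g1 y" unfolding g1_def by (simp add: divide_inverse)
  qed
  have gb1: "\<bar>g1 x\<bar> \<le> 1 / Rk v" if "u \<le> x" "x \<le> v" for x
  proof -
    have x0: "0 \<le> x" "x < L" using that u1 vL by auto
    have "0 < Rk x" using Rk_pos x0 by auto
    moreover have "Rk v \<le> Rk x" using Rk_anti[of x v] x0 that by auto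
    moreover have "E x \<le> 1" "0 < E x" using E_le1[of x] E_pos[of x] x0 by auto
    ultimately have "E x / Rk x \<le> 1 / Rk v"
      using Rkv by (intro frac_le) auto
    then show ?thesis unfolding g1_def using \<open>0 < Rk x\<close> \<open>0 < E x\<close> by simp
  qed
  have Qne: "\<epsilon> \<le> \<bar>Q x\<bar>" if "u \<le> x" "x \<le> v" for x
  proof -
    have "x \<in> {u..v}" using that by auto
    then have "\<epsilon> \<le> Q x \<or> Q x \<le> - \<epsilon>" using Qs by blast
    then show ?thesis using ep by linarith
  qed
  have Qsign: "(0 < Q y \<and> 0 < Q x) \<or> (Q x < 0 \<and> Q y < 0)" if "x \<in> {u..v}" "y \<in> {u..v}" for x y
    using Qs
  proof (elim disjE)
    assume H: "\<forall>x\<in>{u..v}. \<epsilon> \<le> Q x"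
    show ?thesis using H[rule_format, OF that(1)] H[rule_format, OF that(2)] ep by linarith
  next
    assume H: "\<forall>x\<in>{u..v}. Q x \<le> - \<epsilon>"
    show ?thesis using H[rule_format, OF that(1)] H[rule_format, OF that(2)] ep by linarith
  qed
  have mono2: "(\<forall>x y. u \<le> x \<longrightarrow> x \<le> y \<longrightarrow> y \<le> v \<longrightarrow> g2 x \<le> g2 y) \<or>
               (\<forall>x y. u \<le> x \<longrightarrow> x \<le> y \<longrightarrow> y \<le> v \<longrightarrow> g2 y \<le> g2 x)"
  proof (cases "s = 1")
    case True
    show ?thesis
    proof (intro disjI1 allI impI)
      fix x y assume xy: "u \<le> x" "x \<le> y" "y \<le> v"
      have "Q y \<le> Q x" using Q_mono_cases[of x y] xy u1 True by auto
      moreover have "(0 < Q y \<and> 0 < Q x) \<or> (Q x < 0 \<and> Q y < 0)" using Qsign[of x y] xy by auto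
      ultimately show "g2 x \<le> g2 y" unfolding g2_def
        using le_imp_inverse_le le_imp_inverse_le_neg by blast
    qed
  next
    case False
    then have sm: "s = -1" using s by auto
    show ?thesis
    proof (intro disjI2 allI impI)
      fix x y assume xy: "u \<le> x" "x \<le> y" "y \<le> v"
      have "Q x \<le> Q y" using Q_mono_cases[of x y] xy u1 sm by auto
      moreover have "(0 < Q y \<and> 0 < Q x) \<or> (Q x < 0 \<and> Q y < 0)" using Qsign[of x y] xy by auto
      ultimately show "g2 y \<le> g2 x" unfolding g2_def
        using le_imp_inverse_le le_imp_inverse_le_neg by blast
    qed
  qed
  have gb2: "\<bar>g2 x\<bar> \<le> 1 / \<epsilon>" if "u \<le> x" "x \<le> v" for x
  proof -
    have "\<bar>g2 x\<bar> = inverse \<bar>Q x\<bar>" unfolding g2_def by simp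
    also have "\<dots> \<le> inverse \<epsilon>" using Qne[OF that] ep by (intro le_imp_inverse_le) auto
    finally show ?thesis by (simp add: divide_inverse)
  qed
  have main: "norm (integral {u..v} (\<lambda>x. complex_of_real (g1 x * g2 x) * \<phi> x)) \<le> 16 * (1 / Rk v) * (1 / \<epsilon>)"
    by (rule vdc_complex[OF uv FTC Fb mono1 gb1 mono2 gb2])
  have feq: "f x = - \<i> * (complex_of_real (g1 x * g2 x) * \<phi> x)" if "x \<in> {u..v}" for x
  proof -
    have "Q x \<noteq> 0" using Qne[of x] that ep by auto
    then show ?thesis unfolding f_eq \<phi>_def g1_def g2_def dP_eq
      by (simp add: field_simps)
  qed
  have "integral {u..v} f = - \<i> * integral {u..v} (\<lambda>x. complex_of_real (g1 x * g2 x) * \<phi> x)"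
  proof -
    have "integral {u..v} f = integral {u..v} (\<lambda>x. - \<i> * (complex_of_real (g1 x * g2 x) * \<phi> x))"
      by (rule integral_cong[OF feq])
    also have "\<dots> = - \<i> * integral {u..v} (\<lambda>x. complex_of_real (g1 x * g2 x) * \<phi> x)"
      by (rule integral_mult_right)
    finally show ?thesis .
  qed
  then show ?thesis using main by (simp add: norm_mult)
qed

end

context lsetup begin

lemma int_split3:
  assumes "0 \<le> a1" "a1 \<le> a2" "a2 \<le> a3" "a3 \<le> L"
  shows "integral {a1..a3} f = integral {a1..a2} f + integral {a2..a3} f"
proof -
  have "f integrable_on {a1..a3}"
    by (rule integrable_subinterval_real[OF f_integrable]) (use assms in auto)
  then show ?thesis using Henstock_Kurzweil_Integration.integral_combine[of a1 a2 a3 f] assms by auto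
qed

lemma norm_split:
  assumes "0 \<le> a1" "a1 \<le> a2" "a2 \<le> a3" "a3 \<le> L"
  shows "norm (integral {a1..a3} f) \<le> norm (integral {a1..a2} f) + norm (integral {a2..a3} f)"
  unfolding int_split3[OF assms] by (rule norm_triangle_ineq)

lemma Rk_ge: assumes "0 \<le> w" "w \<le> L" shows "sqrt (\<rho> l - w\<^sup>2) \<le> Rk w"
  unfolding Rk_def using \<rho>k by simp

lemma split_good:
  assumes u0: "1 \<le> u0" and Qg: "\<And>x. u0 \<le> x \<Longrightarrow> x < L \<Longrightarrow> 1/2 \<le> Q x"
  shows "norm (integral {0..L} f) \<le> 34 + min (1 / c k) (u0 + 1)"
proof (cases "L\<^sup>2 \<le> u0\<^sup>2 + 1")
  case True
  have "(u0 + 1)\<^sup>2 = u0\<^sup>2 + 1 + 2 * u0" by (simp add: power2_sum)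
  then have "L\<^sup>2 \<le> (u0 + 1)\<^sup>2" using True u0 by linarith
  then have "L \<le> u0 + 1" by (rule power2_le_imp_le) (use u0 in auto)
  moreover have "norm (integral {0..L} f) \<le> sqrt (L\<^sup>2 - 0\<^sup>2)" using triv_bound(2)[of 0 L] L_pos by auto
  moreover have "norm (integral {0..L} f) \<le> 1 / c k" using triv_bound(1)[of 0 L] L_pos by auto
  ultimately show ?thesis using L_pos by auto
next
  case False
  define w where "w = sqrt (L\<^sup>2 - 1)"
  have u02: "1 \<le> u0\<^sup>2" using u0 by (simp add: one_le_power)
  have w2: "w\<^sup>2 = L\<^sup>2 - 1" unfolding w_def using False u02 by simp
  have "u0 < w" unfolding w_def using False u0 real_less_rsqrt by force
  have "sqrt (L\<^sup>2 - 1) < sqrt (L\<^sup>2)" by (rule real_sqrt_less_mono) simp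
  then have "w < L" unfolding w_def using L_pos by simp
  have "0 \<le> w" unfolding w_def using False u02 by simp
  have b1: "norm (integral {0..u0} f) \<le> min (1 / c k) (u0 + 1)"
  proof -
    have "norm (integral {0..u0} f) \<le> 1 / c k" using triv_bound(1)[of 0 u0] u0 \<open>u0 < w\<close> \<open>w < L\<close> by auto
    moreover have "norm (integral {0..u0} f) \<le> sqrt (u0\<^sup>2 - 0\<^sup>2)" using triv_bound(2)[of 0 u0] u0 \<open>u0 < w\<close> \<open>w < L\<close> by auto
    ultimately show ?thesis using u0 by auto
  qed
  have b2: "norm (integral {u0..w} f) \<le> 32"
  proof -
    have "1 \<le> Rk w"
    proof -
      have "\<rho> l - w\<^sup>2 = 1" using w2 L2 by simp
      then show ?thesis using Rk_ge[of w] \<open>0 \<le> w\<close> \<open>w < L\<close> by auto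
    qed
    then have r1: "1 / Rk w \<le> 1" by simp
    have "norm (integral {u0..w} f) \<le> 16 * (1 / Rk w) * (1 / (1/2))"
      by (rule vdc_region) (use u0 \<open>u0 < w\<close> \<open>w < L\<close> Qg in auto)
    also have "\<dots> = 32 * (1 / Rk w)" by simp
    also have "\<dots> \<le> 32" using r1 by simp
    finally show ?thesis .
  qed
  have b3: "norm (integral {w..L} f) \<le> 1"
    using triv_bound(2)[of w L] \<open>0 \<le> w\<close> \<open>w < L\<close> w2 by auto
  have "norm (integral {0..L} f) \<le> norm (integral {0..u0} f) + norm (integral {u0..L} f)"
    by (rule norm_split) (use u0 \<open>u0 < w\<close> \<open>w < L\<close> in auto)
  moreover have "norm (integral {u0..L} f) \<le> norm (integral {u0..w} f) + norm (integral {w..L} f)"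
    by (rule norm_split) (use u0 \<open>u0 < w\<close> \<open>w < L\<close> in auto)
  ultimately show ?thesis using b1 b2 b3 by linarith
qed

definition "B = (\<Sum>j=1..m. b j)"

lemma B_nonneg: "0 \<le> B" unfolding B_def
proof (intro sum_nonneg)
  fix j assume "j \<in> {1..m}" then show "0 \<le> b j" using bpos by (meson less_imp_le)
qed

lemma bound_Y: "norm (integral {0..L} f) \<le> 36 * (1 + B / c k)"
proof -
  define u0 where "u0 = max 1 (2 * B)"
  have "norm (integral {0..L} f) \<le> 34 + min (1 / c k) (u0 + 1)"
  proof (rule split_good)
    show "1 \<le> u0" unfolding u0_def by auto
    fix x assume x: "u0 \<le> x" "x < L"
    then have x1: "1 \<le> x" and x2: "2 * B \<le> x" unfolding u0_def by auto
    have "g x \<le> B / x" using g_le[OF x1] unfolding B_def .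
    also have "\<dots> \<le> 1/2" using x1 x2 by (simp add: divide_simps)
    finally have "g x \<le> 1/2" .
    then show "1/2 \<le> Q x" unfolding Q_def using s g_nonneg[OF x1] by auto
  qed
  moreover have "min (1 / c k) (u0 + 1) \<le> 2 + 2 * B / c k"
  proof (cases "1 \<le> c k")
    case True
    then have "1 / c k \<le> 1" by simp
    moreover have "0 \<le> 2 * B / c k" using B_nonneg ck by simp
    ultimately show ?thesis by linarith
  next
    case False
    then have "B \<le> B / c k" using B_nonneg ck by (simp add: divide_simps mult_left_le)
    moreover have "u0 + 1 \<le> 2 + 2 * B" unfolding u0_def using B_nonneg by auto
    ultimately show ?thesis by linarith
  qed
  moreover have "0 \<le> B / c k" using B_nonneg ck by simp
  moreover have "2 * B / c k = 2 * (B / c k)" by simp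
  moreover have "36 * (1 + B / c k) = 36 + 36 * (B / c k)" by simp
  ultimately show ?thesis by linarith
qed

end

lemma term_ineq:
  fixes a c b K :: real
  assumes a: "0 < a" and ac: "a \<le> c" and cK: "c\<^sup>2 \<le> K" and b: "0 < b"
  shows "b / c * (c\<^sup>2 - a\<^sup>2) / (2*K) \<le> b/a - b/c"
proof -
  have c: "0 < c" using a ac by linarith
  have K: "0 < K" using c cK by (smt (verit) zero_less_power)
  have e1: "b/a - b/c = (b*(c-a)) * (1/(a*c))" using a c by (simp add: field_simps)
  have e2: "b/c*(c\<^sup>2-a\<^sup>2)/(2*K) = (b*(c-a)) * ((c+a)/(2*K*c))" using c K
    by (simp add: field_simps power2_eq_square)
  have "a*(c+a) \<le> c*(c+c)" using a ac by (intro mult_mono) auto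
  also have "\<dots> = 2 * c\<^sup>2" by (simp add: power2_eq_square)
  also have "\<dots> \<le> 2 * K" using cK by simp
  finally have h: "a*(c+a) \<le> 2*K" .
  have "(c+a)/(2*K*c) \<le> 1/(a*c)"
  proof -
    have "(c+a)/(2*K*c) = (a*(c+a)) / (2*K*(a*c))" using a c K by (simp add: field_simps)
    also have "\<dots> \<le> (2*K) / (2*K*(a*c))" using h a c K by (intro divide_right_mono) auto
    also have "\<dots> = 1/(a*c)" using K by simp
    finally show ?thesis .
  qed
  moreover have "0 \<le> b*(c-a)" using b ac by simp
  ultimately have "(b*(c-a)) * ((c+a)/(2*K*c)) \<le> (b*(c-a)) * (1/(a*c))"
    by (intro mult_left_mono)
  then show ?thesis unfolding e1 e2 .
qed

context lsetup begin

definition "Dd = sqrt (1 + \<sigma> 1 + \<rho> l)"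

lemma \<sigma>1: "0 \<le> \<sigma> 1" using \<sigma>_nonneg[of 1] m1 by auto

lemma Dd2: "Dd\<^sup>2 = 1 + \<sigma> 1 + \<rho> l" unfolding Dd_def using \<sigma>1 \<rho>l by simp

lemma Dd1: "1 \<le> Dd" unfolding Dd_def using \<sigma>1 \<rho>l by simp

lemma gdiff: assumes "1 \<le> x" "x \<le> y" "y \<le> L"
  shows "g y * (y\<^sup>2 - x\<^sup>2) / (2 * Dd\<^sup>2) \<le> g x - g y"
proof -
  have "g y * (y\<^sup>2 - x\<^sup>2) / (2 * Dd\<^sup>2) = (\<Sum>j=1..m. b j / sqrt (y\<^sup>2 + \<sigma> j) * ((sqrt (y\<^sup>2 + \<sigma> j))\<^sup>2 - (sqrt (x\<^sup>2 + \<sigma> j))\<^sup>2) / (2 * Dd\<^sup>2))"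
  proof -
    have "(sqrt (y\<^sup>2 + \<sigma> j))\<^sup>2 - (sqrt (x\<^sup>2 + \<sigma> j))\<^sup>2 = y\<^sup>2 - x\<^sup>2" if "j \<in> {1..m}" for j
      using sq_pos[OF assms(1) that] sq_pos[of y j] assms that by simp
    then show ?thesis unfolding g_def sum_distrib_right sum_divide_distrib by (intro sum.cong) auto
  qed
  also have "\<dots> \<le> (\<Sum>j=1..m. b j / sqrt (x\<^sup>2 + \<sigma> j) - b j / sqrt (y\<^sup>2 + \<sigma> j))"
  proof (rule sum_mono)
    fix j assume j: "j \<in> {1..m}"
    have y1: "1 \<le> y" using assms by linarith
    show "b j / sqrt (y\<^sup>2 + \<sigma> j) * ((sqrt (y\<^sup>2 + \<sigma> j))\<^sup>2 - (sqrt (x\<^sup>2 + \<sigma> j))\<^sup>2) / (2 * Dd\<^sup>2)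
          \<le> b j / sqrt (x\<^sup>2 + \<sigma> j) - b j / sqrt (y\<^sup>2 + \<sigma> j)"
    proof (rule term_ineq)
      show "0 < sqrt (x\<^sup>2 + \<sigma> j)" using sq_pos[OF assms(1) j] by simp
      have "x\<^sup>2 \<le> y\<^sup>2" using assms by (intro power_mono) auto
      then show "sqrt (x\<^sup>2 + \<sigma> j) \<le> sqrt (y\<^sup>2 + \<sigma> j)" by simp
      have "y\<^sup>2 \<le> \<rho> l" using x2_le[of y] assms by auto
      then show "(sqrt (y\<^sup>2 + \<sigma> j))\<^sup>2 \<le> Dd\<^sup>2"
        using sq_pos[OF y1 j] \<sigma>_le1[OF j] Dd2 by simp
      show "0 < b j" using bpos j by auto
    qed
  qed
  also have "\<dots> = g x - g y" unfolding g_def by (simp add: sum_subtractf)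
  finally show ?thesis .
qed

lemma Q_cont: assumes "1 \<le> a" shows "continuous_on {a..b'} Q"
proof -
  have "sqrt (x\<^sup>2 + \<sigma> j) \<noteq> 0" if "x \<in> {a..b'}" "j \<in> {1..m}" for x j
    using sq_pos[of x j] that assms by auto
  then show ?thesis unfolding Q_def[abs_def] g_def by (intro continuous_intros) auto
qed

end

context lsetup begin

lemma vdc_D:
  assumes "1 \<le> a" "a \<le> b'" "b' < L" "sqrt Dd \<le> Rk b'"
    and "(\<forall>x\<in>{a..b'}. 1/Dd \<le> Q x) \<or> (\<forall>x\<in>{a..b'}. Q x \<le> - (1/Dd))"
  shows "norm (integral {a..b'} f) \<le> 16 * sqrt Dd"
proof -
  have D0: "0 < Dd" using Dd1 by linarith
  have sD: "0 < sqrt Dd" using D0 by simp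
  have "norm (integral {a..b'} f) \<le> 16 * (1 / Rk b') * (1 / (1/Dd))"
    by (rule vdc_region) (use assms D0 in auto)
  also have "\<dots> = 16 * (Dd / Rk b')" by simp
  also have "\<dots> \<le> 16 * (Dd / sqrt Dd)"
  proof -
    have r: "0 < Rk b'" using assms(4) sD by linarith
    have rs: "0 < Rk b' * sqrt Dd" using r sD by (rule mult_pos_pos)
    have "Dd / Rk b' \<le> Dd / sqrt Dd"
      by (rule divide_left_mono[OF assms(4)]) (use rs D0 in auto)
    then show ?thesis by simp
  qed
  also have "Dd / sqrt Dd = sqrt Dd" using D0 by (simp add: real_div_sqrt)
  finally show ?thesis .
qed

lemma bound_X_neg: assumes sm: "s = -1" shows "norm (integral {0..L} f) \<le> 37 * sqrt Dd"
proof (cases "L\<^sup>2 \<le> Dd + 1")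
  case True
  have "(2 * sqrt Dd)\<^sup>2 = 4 * Dd" using Dd1 by (simp add: power_mult_distrib)
  then have "L\<^sup>2 \<le> (2 * sqrt Dd)\<^sup>2" using True Dd1 by linarith
  then have "L \<le> 2 * sqrt Dd" by (rule power2_le_imp_le) (use Dd1 in auto)
  moreover have "norm (integral {0..L} f) \<le> sqrt (L\<^sup>2 - 0\<^sup>2)" using triv_bound(2)[of 0 L] L_pos by auto
  moreover have "0 \<le> sqrt Dd" using Dd1 by simp
  ultimately show ?thesis using L_pos by auto
next
  case False
  have D0: "0 < Dd" using Dd1 by linarith
  have sD1: "1 \<le> sqrt Dd" using Dd1 by simp
  have D2: "2 < Dd"
  proof (rule ccontr)
    assume "\<not> 2 < Dd"
    then have "Dd * Dd \<le> 2 * Dd" using D0 by (intro mult_right_mono) auto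
    moreover have "Dd * Dd = 1 + \<sigma> 1 + \<rho> l" using Dd2 by (simp add: power2_eq_square)
    moreover have "\<rho> l = L\<^sup>2" using L2 by simp
    ultimately show False using False \<sigma>1 \<open>\<not> 2 < Dd\<close> by linarith
  qed
  define \<epsilon> where "\<epsilon> = 1 / Dd"
  have ep0: "0 < \<epsilon>" unfolding \<epsilon>_def using D0 by simp
  have ep2: "\<epsilon> < 1/2" unfolding \<epsilon>_def using D2 by (simp add: divide_simps)
  define w where "w = sqrt (L\<^sup>2 - Dd)"
  have w2: "w\<^sup>2 = L\<^sup>2 - Dd" unfolding w_def using False D0 by simp
  have "1 < w"
  proof -
    have "sqrt 1 < sqrt (L\<^sup>2 - Dd)" using False by (intro real_sqrt_less_mono) linarith
    then show ?thesis unfolding w_def by simp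
  qed
  have "w < L"
  proof -
    have "sqrt (L\<^sup>2 - Dd) < sqrt (L\<^sup>2)" using D0 by (intro real_sqrt_less_mono) linarith
    then show ?thesis unfolding w_def using L_pos by simp
  qed
  have RkD: "sqrt Dd \<le> Rk x" if "1 \<le> x" "x \<le> w" for x
  proof -
    have "\<rho> l - w\<^sup>2 = Dd" using w2 L2 by simp
    then have "sqrt Dd \<le> Rk w" using Rk_ge[of w] \<open>1 < w\<close> \<open>w < L\<close> by auto
    also have "Rk w \<le> Rk x" using Rk_anti[of x w] that by auto
    finally show ?thesis .
  qed
  have Qinc: "Q x \<le> Q y" if "1 \<le> x" "x \<le> y" for x y
    using Q_mono_cases[OF that] sm by auto
  have Qg: "Q x = 1 - g x" for x unfolding Q_def using sm by simp
  have vd: "norm (integral {a..b'} f) \<le> 16 * sqrt Dd"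
    if "1 \<le> a" "a \<le> b'" "b' \<le> w" "(\<forall>x\<in>{a..b'}. \<epsilon> \<le> Q x) \<or> (\<forall>x\<in>{a..b'}. Q x \<le> - \<epsilon>)" for a b'
    by (rule vdc_D) (use that \<open>w < L\<close> RkD[of b'] in \<open>auto simp: \<epsilon>_def\<close>)
  have mid: "norm (integral {1..w} f) \<le> 35 * sqrt Dd"
  proof -
    consider (W1) "Q w \<le> - \<epsilon>" | (W2) "\<epsilon> \<le> Q 1" | (W3) "- \<epsilon> < Q w" "Q 1 < \<epsilon>" by linarith
    then show ?thesis
    proof cases
      case W1
      have "\<forall>x\<in>{1..w}. Q x \<le> - \<epsilon>" using Qinc W1 by force
      then have "norm (integral {1..w} f) \<le> 16 * sqrt Dd" using vd[of 1 w] \<open>1 < w\<close> by auto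
      then show ?thesis using sD1 by linarith
    next
      case W2
      have "\<forall>x\<in>{1..w}. \<epsilon> \<le> Q x" using Qinc W2 by force
      then have "norm (integral {1..w} f) \<le> 16 * sqrt Dd" using vd[of 1 w] \<open>1 < w\<close> by auto
      then show ?thesis using sD1 by linarith
    next
      case W3
      obtain p where p1: "1 \<le> p" "p \<le> w" "- \<epsilon> \<le> Q p" "Q p \<le> \<epsilon>"
        and p2: "p = 1 \<or> (\<forall>x\<in>{1..p}. Q x \<le> - \<epsilon>)"
      proof (cases "- \<epsilon> \<le> Q 1")
        case True
        then show ?thesis using that[of 1] W3 \<open>1 < w\<close> by auto
      next
        case False
        obtain p where p: "1 \<le> p" "p \<le> w" "Q p = - \<epsilon>"
          using IVT'[of Q 1 "- \<epsilon>" w] False W3 \<open>1 < w\<close> Q_cont[of 1 w] by auto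
        have "\<forall>x\<in>{1..p}. Q x \<le> - \<epsilon>" using Qinc p by force
        then show ?thesis using that[of p] p ep0 by auto
      qed
      obtain q where q1: "p \<le> q" "q \<le> w" "Q q \<le> \<epsilon>"
        and q2: "q = w \<or> (\<forall>x\<in>{q..w}. \<epsilon> \<le> Q x)"
      proof (cases "Q w \<le> \<epsilon>")
        case True
        then show ?thesis using that[of w] p1 by auto
      next
        case False
        obtain q where q: "p \<le> q" "q \<le> w" "Q q = \<epsilon>"
          using IVT'[of Q p \<epsilon> w] False p1 Q_cont[of p w] by auto
        have "\<forall>x\<in>{q..w}. \<epsilon> \<le> Q x" using Qinc q p1 by force
        then show ?thesis using that[of q] q by auto
      qed
      have b1: "norm (integral {1..p} f) \<le> 16 * sqrt Dd"
        using p2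
      proof
        assume "p = 1" then show ?thesis using sD1 by simp
      next
        assume "\<forall>x\<in>{1..p}. Q x \<le> - \<epsilon>"
        then show ?thesis using vd[of 1 p] p1 by auto
      qed
      have b3: "norm (integral {q..w} f) \<le> 16 * sqrt Dd"
        using q2
      proof
        assume "q = w" then show ?thesis using sD1 by simp
      next
        assume "\<forall>x\<in>{q..w}. \<epsilon> \<le> Q x"
        then show ?thesis using vd[of q w] p1 q1 by auto
      qed
      have b2: "norm (integral {p..q} f) \<le> 3 * sqrt Dd"
      proof -
        define t where "t = q\<^sup>2 - p\<^sup>2"
        have t0: "0 \<le> t" unfolding t_def using p1 q1 by (simp add: power_mono)
        have gd: "g q * t / (2 * Dd\<^sup>2) \<le> g p - g q"
          unfolding t_def by (rule gdiff) (use p1 q1 \<open>w < L\<close> in auto)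
        have "g p - g q \<le> 2 * \<epsilon>" using p1 q1 Qg[of p] Qg[of q] by linarith
        have gq: "1/2 \<le> g q" using q1 Qg[of q] ep2 by linarith
        have "(1/2) * t / (2 * Dd\<^sup>2) \<le> g q * t / (2 * Dd\<^sup>2)"
          using gq t0 by (intro divide_right_mono mult_right_mono) auto
        then have "t / (4 * Dd\<^sup>2) \<le> 2 / Dd"
          using gd \<open>g p - g q \<le> 2 * \<epsilon>\<close> unfolding \<epsilon>_def by simp
        then have "t \<le> 2 / Dd * (4 * Dd\<^sup>2)" using D0 by (simp add: pos_divide_le_eq)
        also have "2 / Dd * (4 * Dd\<^sup>2) = 8 * Dd" using D0 by (simp add: power2_eq_square)
        finally have t8: "t \<le> 8 * Dd" .
        have "norm (integral {p..q} f) \<le> sqrt t"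
          unfolding t_def by (rule triv_bound(2)) (use p1 q1 \<open>w < L\<close> in auto)
        also have "\<dots> \<le> sqrt (8 * Dd)" using t8 by simp
        also have "\<dots> = sqrt 8 * sqrt Dd" by (simp add: real_sqrt_mult)
        also have "\<dots> \<le> 3 * sqrt Dd"
        proof -
          have "sqrt 8 \<le> 3" by (rule real_le_lsqrt) auto
          then show ?thesis using D0 by (intro mult_right_mono) auto
        qed
        finally show ?thesis .
      qed
      have "norm (integral {1..w} f) \<le> norm (integral {1..p} f) + norm (integral {p..w} f)"
        by (rule norm_split) (use p1 \<open>w < L\<close> in auto)
      moreover have "norm (integral {p..w} f) \<le> norm (integral {p..q} f) + norm (integral {q..w} f)"
        by (rule norm_split) (use p1 q1 \<open>w < L\<close> in auto)
      ultimately show ?thesis using b1 b2 b3 by linarith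
    qed
  qed
  have e1: "norm (integral {0..1} f) \<le> 1"
    using triv_bound(2)[of 0 1] \<open>1 < w\<close> \<open>w < L\<close> by auto
  have e3: "norm (integral {w..L} f) \<le> sqrt Dd"
    using triv_bound(2)[of w L] \<open>1 < w\<close> \<open>w < L\<close> w2 by auto
  have "norm (integral {0..L} f) \<le> norm (integral {0..1} f) + norm (integral {1..L} f)"
    by (rule norm_split) (use \<open>1 < w\<close> \<open>w < L\<close> in auto)
  moreover have "norm (integral {1..L} f) \<le> norm (integral {1..w} f) + norm (integral {w..L} f)"
    by (rule norm_split) (use \<open>1 < w\<close> \<open>w < L\<close> in auto)
  ultimately show ?thesis using e1 mid e3 sD1 by linarith
qed

lemma bound_X: "norm (integral {0..L} f) \<le> 37 * sqrt Dd"
proof (cases "s = 1")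
  case True
  have "norm (integral {0..L} f) \<le> 34 + min (1 / c k) (1 + 1)"
  proof (rule split_good)
    fix x assume x: "1 \<le> x" "x < L"
    show "1/2 \<le> Q x" unfolding Q_def using g_nonneg[OF x(1)] True by simp
  qed simp
  moreover have "1 \<le> sqrt Dd" using Dd1 by simp
  ultimately show ?thesis by linarith
next
  case False
  then show ?thesis using bound_X_neg s by auto
qed

lemma X_eq: "(1 + \<sigma> 1 + \<rho> l) powr (1/4) = sqrt Dd"
proof -
  have A: "0 < 1 + \<sigma> 1 + \<rho> l" using \<sigma>1 \<rho>l by linarith
  have "(1 + \<sigma> 1 + \<rho> l) powr (1/4) = (1 + \<sigma> 1 + \<rho> l) powr (1/2 * (1/2))" by simp
  also have "\<dots> = ((1 + \<sigma> 1 + \<rho> l) powr (1/2)) powr (1/2)" by (simp add: powr_powr)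
  also have "\<dots> = sqrt (sqrt (1 + \<sigma> 1 + \<rho> l))" using A by (simp add: powr_half_sqrt)
  finally show ?thesis unfolding Dd_def .
qed

lemma Y_ge: "1 + B / c k \<le> real m powr (3/2) / c k * Max {b j + c i | j i. j \<in> {1..m} \<and> i \<in> {1..l}}"
proof -
  define S where "S = {b j + c i | j i. j \<in> {1..m} \<and> i \<in> {1..l}}"
  have S_eq: "S = (\<lambda>(j,i). b j + c i) ` ({1..m} \<times> {1..l})" unfolding S_def by force
  have finS: "finite S" unfolding S_eq by simp
  have mem: "b j + c k \<in> S" if "j \<in> {1..m}" for j unfolding S_def using that kin by blast
  have le: "b j + c k \<le> Max S" if "j \<in> {1..m}" for j using Max_ge[OF finS mem[OF that]] .
  have "B + real m * c k = (\<Sum>j=1..m. b j + c k)" unfolding B_def by (simp add: sum.distrib)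
  also have "\<dots> \<le> (\<Sum>j=1..m. Max S)" using le by (intro sum_mono) auto
  also have "\<dots> = real m * Max S" by simp
  finally have h1: "B + real m * c k \<le> real m * Max S" .
  have "c k \<le> real m * c k" using m1 ck by simp
  then have h2: "B + c k \<le> real m * Max S" using h1 by linarith
  have MS0: "0 < Max S" using le[of 1] m1 bpos ck by force
  have "real m powr 1 \<le> real m powr (3/2)" using m1 by (intro powr_mono) auto
  then have h3: "real m \<le> real m powr (3/2)" using m1 by simp
  have "1 + B / c k = (B + c k) / c k" using ck by (simp add: field_simps)
  also have "\<dots> \<le> real m * Max S / c k" using h2 ck by (intro divide_right_mono) auto
  also have "\<dots> \<le> real m powr (3/2) * Max S / c k" using h3 MS0 ck
    by (intro divide_right_mono mult_right_mono) auto
  also have "\<dots> = real m powr (3/2) / c k * Max S" by simp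
  finally show ?thesis unfolding S_def .
qed

lemma final:
  "norm (integral {0..L} f) \<le> 37 * min ((1 + \<sigma> 1 + \<rho> l) powr (1/4))
                 (real m powr (3/2) / c k * Max {b j + c i | j i. j \<in> {1..m} \<and> i \<in> {1..l}})"
proof -
  have "norm (integral {0..L} f) \<le> 37 * (1 + \<sigma> 1 + \<rho> l) powr (1/4)"
    using bound_X X_eq by simp
  moreover have "norm (integral {0..L} f) \<le> 37 * (real m powr (3/2) / c k * Max {b j + c i | j i. j \<in> {1..m} \<and> i \<in> {1..l}})"
  proof -
    have "0 \<le> B / c k" using B_nonneg ck by simp
    have "norm (integral {0..L} f) \<le> 36 * (1 + B / c k)" by (rule bound_Y)
    also have "\<dots> \<le> 37 * (1 + B / c k)" using \<open>0 \<le> B / c k\<close> by simp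
    also have "\<dots> \<le> 37 * (real m powr (3/2) / c k * Max {b j + c i | j i. j \<in> {1..m} \<and> i \<in> {1..l}})"
      using Y_ge by simp
    finally show ?thesis .
  qed
  ultimately show ?thesis by (simp add: min_def)
qed

end

theorem lemma7p6:
  shows "\<exists>C0::real. \<forall>(m::nat) (l::nat) (\<sigma>::nat \<Rightarrow> real) (\<rho>::nat \<Rightarrow> real)
            (b::nat \<Rightarrow> real) (c::nat \<Rightarrow> real) (k::nat) (s::real).
     1 \<le> m \<longrightarrow> 1 \<le> l \<longrightarrow>
     (\<forall>j\<in>{1..<m}. \<sigma> j \<ge> \<sigma> (Suc j)) \<longrightarrow> \<sigma> m \<ge> 0 \<longrightarrow>
     (\<forall>i\<in>{1..<l}. \<rho> i \<ge> \<rho> (Suc i)) \<longrightarrow> \<rho> l > 0 \<longrightarrow>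
     (\<forall>j\<in>{1..m}. b j > 0) \<longrightarrow> (\<forall>i\<in>{1..l}. c i > 0) \<longrightarrow>
     k \<in> {1..l} \<longrightarrow> s \<in> {1, -1} \<longrightarrow>
     norm (integral {0..sqrt (\<rho> l)}
        (\<lambda>x::real. exp (\<i> * complex_of_real (x\<^sup>2 / 2))
           * exp (\<i> * complex_of_real (s * (\<Sum>j=1..m. b j * sqrt (x\<^sup>2 + \<sigma> j))))
           * complex_of_real (exp (- (\<Sum>i=1..l. c i * sqrt (\<rho> i - x\<^sup>2)))
                               * x / sqrt (\<rho> k - x\<^sup>2))))
     \<le> C0 * min ((1 + \<sigma> 1 + \<rho> l) powr (1/4))
                 (real m powr (3/2) / c k
                    * Max {b j + c i | j i. j \<in> {1..m} \<and> i \<in> {1..l}})"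
proof (rule exI[of _ 37], intro allI impI)
  fix m l :: nat and \<sigma> \<rho> b c :: "nat \<Rightarrow> real" and k :: nat and s :: real
  assume h: "1 \<le> m" "1 \<le> l" "\<forall>j\<in>{1..<m}. \<sigma> j \<ge> \<sigma> (Suc j)" "\<sigma> m \<ge> 0"
    "\<forall>i\<in>{1..<l}. \<rho> i \<ge> \<rho> (Suc i)" "\<rho> l > 0" "\<forall>j\<in>{1..m}. b j > 0" "\<forall>i\<in>{1..l}. c i > 0"
    "k \<in> {1..l}" "s \<in> {1, -1}"
  interpret lsetup m l \<sigma> \<rho> b c k s using h by unfold_locales
  show "norm (integral {0..sqrt (\<rho> l)}
        (\<lambda>x::real. exp (\<i> * complex_of_real (x\<^sup>2 / 2))
           * exp (\<i> * complex_of_real (s * (\<Sum>j=1..m. b j * sqrt (x\<^sup>2 + \<sigma> j))))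
           * complex_of_real (exp (- (\<Sum>i=1..l. c i * sqrt (\<rho> i - x\<^sup>2)))
                               * x / sqrt (\<rho> k - x\<^sup>2))))
     \<le> 37 * min ((1 + \<sigma> 1 + \<rho> l) powr (1/4))
                 (real m powr (3/2) / c k
                    * Max {b j + c i | j i. j \<in> {1..m} \<and> i \<in> {1..l}})"
    using final unfolding f_def L_def .
qed

end
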